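(* Let $A$ be an algebra of Jordan type half over a field $\mathbb{F}$ of characteristic zero. If $a,b\in A$ are primitive axes of Jordan type half with $(a,b)=0$, then every non-zero, non-identity idempotent of $J=\langle\langle a,b\rangle\rangle$ is a primitive axis of Jordan type half in $A$; that is, $J$ is solid.
   Context: All algebras are commutative, not necessarily associative; $A_\lambda(x)=\{u\in A:xu=\lambda u\}$. A primitive axis of Jordan type half is $x\neq0$ with $x^2=x$, $A=A_1(x)\oplus A_0(x)\oplus A_{1/2}(x)$, $A_1(x)=\mathbb{F}x$, and fusion rules $A_1A_1\subseteq A_1$, $A_1A_0=0$, $A_0A_0\subseteq A_0$, $A_1A_{1/2},A_0A_{1/2}\subseteq A_{1/2}$, $A_{1/2}A_{1/2}\subseteq A_1\oplus A_0$. An algebra of Jordan type half is a commutative algebra generated by such axes; it has a unique Frobenius form $(\cdot,\cdot)$ (bilinear, $(uv,w)=(u,vw)$, $(x,x)=1$ for primitive axes $x$). $J=\langle\langle a,b\rangle\rangle$ is solid if every idempotent $c\in J$ with $c\neq0$, $c\neq1_J$ (the identity of $J$) is a primitive axis of Jordan type half in $A$. *)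

theory Defs
  imports Complex_Main
begin

definition comm_algebra ::
  "('k::field \<Rightarrow> 'a::ab_group_add \<Rightarrow> 'a) \<Rightarrow> ('a \<Rightarrow> 'a \<Rightarrow> 'a) \<Rightarrow> bool" where
  "comm_algebra scale mult \<longleftrightarrow>
     vector_space scale \<and>
     (\<forall>x y. mult x y = mult y x) \<and>
     (\<forall>x y z. mult (x + y) z = mult x z + mult y z) \<and>
     (\<forall>c x y. mult (scale c x) y = scale c (mult x y))"

definition eigsp ::
  "('k \<Rightarrow> 'a \<Rightarrow> 'a) \<Rightarrow> ('a \<Rightarrow> 'a \<Rightarrow> 'a) \<Rightarrow> 'a \<Rightarrow> 'k \<Rightarrow> 'a set" where
  "eigsp scale mult x l = {u. mult x u = scale l u}"

definition prim_axis_half ::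
  "('k::field \<Rightarrow> 'a::ab_group_add \<Rightarrow> 'a) \<Rightarrow> ('a \<Rightarrow> 'a \<Rightarrow> 'a) \<Rightarrow> 'a \<Rightarrow> bool" where
  "prim_axis_half scale mult x \<longleftrightarrow>
     (let A1 = eigsp scale mult x 1; A0 = eigsp scale mult x 0;
          Ah = eigsp scale mult x (1/2) in
     x \<noteq> 0 \<and> mult x x = x \<and>
     \<comment> \<open>A = A_1 (+) A_0 (+) A_1/2 (direct sum)\<close>
     (\<forall>u. \<exists>!(u1, u0, uh). u1 \<in> A1 \<and> u0 \<in> A0 \<and> uh \<in> Ah \<and> u = u1 + u0 + uh) \<and>
     A1 = range (\<lambda>c. scale c x) \<and>
     \<comment> \<open>fusion rules\<close>
     (\<forall>u\<in>A1. \<forall>v\<in>A1. mult u v \<in> A1) \<and>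
     (\<forall>u\<in>A1. \<forall>v\<in>A0. mult u v = 0) \<and>
     (\<forall>u\<in>A0. \<forall>v\<in>A0. mult u v \<in> A0) \<and>
     (\<forall>u\<in>A1. \<forall>v\<in>Ah. mult u v \<in> Ah) \<and>
     (\<forall>u\<in>A0. \<forall>v\<in>Ah. mult u v \<in> Ah) \<and>
     (\<forall>u\<in>Ah. \<forall>v\<in>Ah. \<exists>p q. p \<in> A1 \<and> q \<in> A0 \<and> mult u v = p + q))"

inductive_set gen_subalg ::
  "('k \<Rightarrow> 'a::ab_group_add \<Rightarrow> 'a) \<Rightarrow> ('a \<Rightarrow> 'a \<Rightarrow> 'a) \<Rightarrow> 'a set \<Rightarrow> 'a set"
  for scale mult S where
  gen_base: "x \<in> S \<Longrightarrow> x \<in> gen_subalg scale mult S"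
| gen_zero: "0 \<in> gen_subalg scale mult S"
| gen_add: "x \<in> gen_subalg scale mult S \<Longrightarrow> y \<in> gen_subalg scale mult S \<Longrightarrow>
    x + y \<in> gen_subalg scale mult S"
| gen_scale: "x \<in> gen_subalg scale mult S \<Longrightarrow> scale c x \<in> gen_subalg scale mult S"
| gen_mult: "x \<in> gen_subalg scale mult S \<Longrightarrow> y \<in> gen_subalg scale mult S \<Longrightarrow>
    mult x y \<in> gen_subalg scale mult S"

definition jordan_half_algebra ::
  "('k::field \<Rightarrow> 'a::ab_group_add \<Rightarrow> 'a) \<Rightarrow> ('a \<Rightarrow> 'a \<Rightarrow> 'a) \<Rightarrow> bool" where
  "jordan_half_algebra scale mult \<longleftrightarrow>
     comm_algebra scale mult \<and>
     (\<exists>X. (\<forall>x\<in>X. prim_axis_half scale mult x) \<and> gen_subalg scale mult X = UNIV)"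

definition frobenius_form ::
  "('k::field \<Rightarrow> 'a::ab_group_add \<Rightarrow> 'a) \<Rightarrow> ('a \<Rightarrow> 'a \<Rightarrow> 'a) \<Rightarrow> ('a \<Rightarrow> 'a \<Rightarrow> 'k) \<Rightarrow> bool" where
  "frobenius_form scale mult B \<longleftrightarrow>
     (\<forall>x y z. B (x + y) z = B x z + B y z) \<and>
     (\<forall>x y z. B x (y + z) = B x y + B x z) \<and>
     (\<forall>c x y. B (scale c x) y = c * B x y) \<and>
     (\<forall>c x y. B x (scale c y) = c * B x y) \<and>
     (\<forall>u v w. B (mult u v) w = B u (mult v w)) \<and>
     (\<forall>x. prim_axis_half scale mult x \<longrightarrow> B x x = 1)"

definition is_identity_of :: "('a \<Rightarrow> 'a \<Rightarrow> 'a) \<Rightarrow> 'a set \<Rightarrow> 'a \<Rightarrow> bool" where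
  "is_identity_of mult J e \<longleftrightarrow> e \<in> J \<and> (\<forall>u\<in>J. mult e u = u)"

definition solid ::
  "('k::field \<Rightarrow> 'a::ab_group_add \<Rightarrow> 'a) \<Rightarrow> ('a \<Rightarrow> 'a \<Rightarrow> 'a) \<Rightarrow> 'a \<Rightarrow> 'a \<Rightarrow> bool" where
  "solid scale mult a b \<longleftrightarrow>
     (\<forall>c \<in> gen_subalg scale mult {a, b}.
        mult c c = c \<and> c \<noteq> 0 \<and> \<not> is_identity_of mult (gen_subalg scale mult {a, b}) c
        \<longrightarrow> prim_axis_half scale mult c)"

end

theory Submission imports Defs "HOL-Computational_Algebra.Polynomial"
begin

locale jh =
  fixes scale :: "'k::field_char_0 \<Rightarrow> 'a::ab_group_add \<Rightarrow> 'a"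
    and mult :: "'a \<Rightarrow> 'a \<Rightarrow> 'a"
    and B :: "'a \<Rightarrow> 'a \<Rightarrow> 'k"
  assumes CA: "comm_algebra scale mult" and FF: "frobenius_form scale mult B"
begin

sublocale V: vector_space scale using CA unfolding comm_algebra_def by blast

lemma comm: "mult x y = mult y x" using CA unfolding comm_algebra_def by blast
lemma ladd: "mult (x + y) z = mult x z + mult y z" using CA unfolding comm_algebra_def by blast
lemma lscale: "mult (scale c x) y = scale c (mult x y)" using CA unfolding comm_algebra_def by blast
lemma radd: "mult z (x + y) = mult z x + mult z y" using ladd comm by metis
lemma rscale: "mult y (scale c x) = scale c (mult y x)" using lscale comm by metis
lemma lzero[simp]: "mult 0 y = 0" by (metis V.scale_zero_left lscale)
lemma rzero[simp]: "mult y 0 = 0" using lzero comm by metis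
lemma lminus: "mult (- x) y = - mult x y" by (metis add_eq_0_iff ladd lzero)
lemma rminus: "mult y (- x) = - mult y x" by (metis lminus comm)
lemma ldiff: "mult (x - y) z = mult x z - mult y z" unfolding diff_conv_add_uminus ladd lminus ..
lemma rdiff: "mult z (x - y) = mult z x - mult z y" unfolding diff_conv_add_uminus radd rminus ..
lemmas mult_simps = ladd radd lscale rscale lminus rminus ldiff rdiff

lemma Bladd: "B (x + y) z = B x z + B y z" using FF unfolding frobenius_form_def by blast
lemma Bradd: "B x (y + z) = B x y + B x z" using FF unfolding frobenius_form_def by blast
lemma Blscale: "B (scale c x) y = c * B x y" using FF unfolding frobenius_form_def by blast
lemma Brscale: "B x (scale c y) = c * B x y" using FF unfolding frobenius_form_def by blast
lemma Bassoc: "B (mult u v) w = B u (mult v w)" using FF unfolding frobenius_form_def by blast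
lemma Bone: "prim_axis_half scale mult x \<Longrightarrow> B x x = 1" using FF unfolding frobenius_form_def by blast
lemma Blzero[simp]: "B 0 y = 0" by (metis V.scale_zero_left Blscale mult_zero_left)
lemma Brzero[simp]: "B y 0 = 0" by (metis V.scale_zero_left Brscale mult_zero_left)

definition E :: "'a \<Rightarrow> 'k \<Rightarrow> 'a set" where "E x l = eigsp scale mult x l"
lemma E_iff: "u \<in> E x l \<longleftrightarrow> mult x u = scale l u" by (simp add: E_def eigsp_def)

definition P1 where "P1 x u = scale 2 (mult x (mult x u)) - mult x u"
definition Ph where "Ph x u = scale 4 (mult x u - mult x (mult x u))"
definition P0 where "P0 x u = u - P1 x u - Ph x u"

lemma s2: "scale 2 x = x + x" using V.scale_left_distrib[of 1 1 x] by simp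

lemma proj:
  assumes "u1 \<in> E x 1" "u0 \<in> E x 0" "uh \<in> E x (1/2)" "u = u1 + u0 + uh"
  shows "P1 x u = u1" "Ph x u = uh" "P0 x u = u0"
proof -
  have xu: "mult x u = u1 + scale (1/2) uh" using assms by (simp add: E_iff mult_simps)
  have xxu: "mult x (u1 + scale (1/2) uh) = u1 + scale (1/4) uh" using assms by (simp add: E_iff mult_simps)
  have a: "scale 2 (u1 + scale (1/4) uh) = u1 + u1 + scale (1/2) uh"
    by (simp add: V.scale_right_distrib s2)
  show 1: "P1 x u = u1" unfolding P1_def xu xxu a by simp
  have "u1 + scale (1/2) uh - (u1 + scale (1/4) uh) = scale (1/2) uh - scale (1/4) uh" by simp
  also have "\<dots> = scale (1/4) uh" using V.scale_left_diff_distrib[of "1/2" "1/4" uh] by simp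
  finally show 2: "Ph x u = uh" unfolding Ph_def xu xxu by simp
  have "P0 x u = u - u1 - uh" unfolding P0_def 1 2 by simp
  then show "P0 x u = u0" using assms(4) by (simp add: algebra_simps)
qed


lemma E_zero[simp]: "0 \<in> E x l" by (simp add: E_iff)

definition good where
  "good x \<longleftrightarrow> x \<noteq> 0 \<and> mult x x = x \<and>
    (\<forall>u. P1 x u \<in> E x 1 \<and> P0 x u \<in> E x 0 \<and> Ph x u \<in> E x (1/2)) \<and>
    (\<forall>u. P1 x u = scale (B x u) x) \<and>
    (\<forall>u v. mult x (mult (P0 x u) (P0 x v)) = 0) \<and>
    (\<forall>u v. mult x (mult (P0 x u) (Ph x v)) = scale (1/2) (mult (P0 x u) (Ph x v))) \<and>
    (\<forall>u v. Ph x (mult (Ph x u) (Ph x v)) = 0)"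

lemma decomp_sum: "u = P1 x u + P0 x u + Ph x u" by (simp add: P0_def)

lemma good_prim:
  assumes g: "good x" shows "prim_axis_half scale mult x"
proof -
  have x0: "x \<noteq> 0" and xx: "mult x x = x"
    and mem: "\<And>u. P1 x u \<in> E x 1" "\<And>u. P0 x u \<in> E x 0" "\<And>u. Ph x u \<in> E x (1/2)"
    and c2: "\<And>u. P1 x u = scale (B x u) x"
    and f3: "\<And>u v. mult x (mult (P0 x u) (P0 x v)) = 0"
    and f5: "\<And>u v. mult x (mult (P0 x u) (Ph x v)) = scale (1/2) (mult (P0 x u) (Ph x v))"
    and f6: "\<And>u v. Ph x (mult (Ph x u) (Ph x v)) = 0"
    using g unfolding good_def by blast+
  have in1: "u \<in> E x 1 \<Longrightarrow> P1 x u = u" for u using proj(1)[of u x 0 0 u] by simp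
  have in0: "u \<in> E x 0 \<Longrightarrow> P0 x u = u" for u using proj(3)[of 0 x u 0 u] by simp
  have inh: "u \<in> E x (1/2) \<Longrightarrow> Ph x u = u" for u using proj(2)[of 0 x 0 u u] by simp
  have A1: "E x 1 = range (\<lambda>c. scale c x)"
  proof
    show "E x 1 \<subseteq> range (\<lambda>c. scale c x)" using in1 c2 by (metis image_subset_iff rangeI subsetI)
    show "range (\<lambda>c. scale c x) \<subseteq> E x 1" by (auto simp: E_iff rscale xx)
  qed
  have dec: "\<exists>!(u1, u0, uh). u1 \<in> E x 1 \<and> u0 \<in> E x 0 \<and> uh \<in> E x (1/2) \<and> u = u1 + u0 + uh" for u
  proof (rule ex1I[where a="(P1 x u, P0 x u, Ph x u)"])
    show "case (P1 x u, P0 x u, Ph x u) of (u1, u0, uh) \<Rightarrow>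
       u1 \<in> E x 1 \<and> u0 \<in> E x 0 \<and> uh \<in> E x (1/2) \<and> u = u1 + u0 + uh"
      using mem decomp_sum by simp
  next
    fix y assume "case y of (u1, u0, uh) \<Rightarrow>
       u1 \<in> E x 1 \<and> u0 \<in> E x 0 \<and> uh \<in> E x (1/2) \<and> u = u1 + u0 + uh"
    then obtain u1 u0 uh where y: "y = (u1, u0, uh)" and h: "u1 \<in> E x 1" "u0 \<in> E x 0" "uh \<in> E x (1/2)" "u = u1 + u0 + uh"
      by (cases y) auto
    show "y = (P1 x u, P0 x u, Ph x u)" using proj[OF h] y by simp
  qed
  have fus11: "\<forall>u\<in>E x 1. \<forall>v\<in>E x 1. mult u v \<in> E x 1"
    using A1 by (auto simp: lscale rscale xx E_iff)
  have fus10: "\<forall>u\<in>E x 1. \<forall>v\<in>E x 0. mult u v = 0"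
    using A1 by (auto simp: lscale E_iff)
  have fus00: "\<forall>u\<in>E x 0. \<forall>v\<in>E x 0. mult u v \<in> E x 0"
    using f3 in0 by (metis E_iff V.scale_zero_left)
  have fus1h: "\<forall>u\<in>E x 1. \<forall>v\<in>E x (1/2). mult u v \<in> E x (1/2)"
    using A1 by (auto simp: lscale rscale E_iff V.scale_left_commute)
  have fus0h: "\<forall>u\<in>E x 0. \<forall>v\<in>E x (1/2). mult u v \<in> E x (1/2)"
    using f5 in0 inh by (metis E_iff)
  have fushh: "\<forall>u\<in>E x (1/2). \<forall>v\<in>E x (1/2). \<exists>p q. p \<in> E x 1 \<and> q \<in> E x 0 \<and> mult u v = p + q"
  proof (intro ballI)
    fix u v assume "u \<in> E x (1/2)" "v \<in> E x (1/2)"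
    then have "Ph x (mult u v) = 0" using f6 inh by metis
    then have "mult u v = P1 x (mult u v) + P0 x (mult u v)" using decomp_sum[of "mult u v" x] by simp
    then show "\<exists>p q. p \<in> E x 1 \<and> q \<in> E x 0 \<and> mult u v = p + q" using mem by blast
  qed
  show ?thesis unfolding prim_axis_half_def Let_def E_def[symmetric]
    using x0 xx dec A1 fus11 fus10 fus00 fus1h fus0h fushh by blast
qed


lemma prim_facts:
  assumes p: "prim_axis_half scale mult x"
  shows "x \<noteq> 0" "mult x x = x"
    "\<And>u. \<exists>u1 u0 uh. u1 \<in> E x 1 \<and> u0 \<in> E x 0 \<and> uh \<in> E x (1/2) \<and> u = u1 + u0 + uh"
    "E x 1 = range (\<lambda>c. scale c x)"
    "\<And>u v. u \<in> E x 0 \<Longrightarrow> v \<in> E x 0 \<Longrightarrow> mult u v \<in> E x 0"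
    "\<And>u v. u \<in> E x 0 \<Longrightarrow> v \<in> E x (1/2) \<Longrightarrow> mult u v \<in> E x (1/2)"
    "\<And>u v. u \<in> E x (1/2) \<Longrightarrow> v \<in> E x (1/2) \<Longrightarrow> \<exists>p q. p \<in> E x 1 \<and> q \<in> E x 0 \<and> mult u v = p + q"
proof -
  note d = p[unfolded prim_axis_half_def Let_def E_def[symmetric]]
  note c2 = d[THEN conjunct2] note c3 = c2[THEN conjunct2] note c4 = c3[THEN conjunct2]
  note c5 = c4[THEN conjunct2] note c6 = c5[THEN conjunct2] note c7 = c6[THEN conjunct2]
  note c8 = c7[THEN conjunct2] note c9 = c8[THEN conjunct2] note c10 = c9[THEN conjunct2]
  show "x \<noteq> 0" by (rule d[THEN conjunct1])
  show "mult x x = x" by (rule c2[THEN conjunct1])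
  have dd: "\<forall>u. \<exists>!(u1, u0, uh). u1 \<in> E x 1 \<and> u0 \<in> E x 0 \<and> uh \<in> E x (1/2) \<and> u = u1 + u0 + uh"
    by (rule c3[THEN conjunct1])
  show "E x 1 = range (\<lambda>c. scale c x)" by (rule c4[THEN conjunct1])
  have a: "\<forall>u\<in>E x 0. \<forall>v\<in>E x 0. mult u v \<in> E x 0" by (rule c7[THEN conjunct1])
  have b: "\<forall>u\<in>E x 0. \<forall>v\<in>E x (1/2). mult u v \<in> E x (1/2)" by (rule c9[THEN conjunct1])
  have c: "\<forall>u\<in>E x (1/2). \<forall>v\<in>E x (1/2). \<exists>p q. p \<in> E x 1 \<and> q \<in> E x 0 \<and> mult u v = p + q"
    by (rule c10)
  show "\<And>u v. u \<in> E x 0 \<Longrightarrow> v \<in> E x 0 \<Longrightarrow> mult u v \<in> E x 0" using a by blast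
  show "\<And>u v. u \<in> E x 0 \<Longrightarrow> v \<in> E x (1/2) \<Longrightarrow> mult u v \<in> E x (1/2)" using b by blast
  show "\<And>u v. u \<in> E x (1/2) \<Longrightarrow> v \<in> E x (1/2) \<Longrightarrow> \<exists>p q. p \<in> E x 1 \<and> q \<in> E x 0 \<and> mult u v = p + q"
    using c by blast
  fix u
  from dd have "\<exists>!(u1, u0, uh). u1 \<in> E x 1 \<and> u0 \<in> E x 0 \<and> uh \<in> E x (1/2) \<and> u = u1 + u0 + uh" by blast
  then obtain y where "case y of (u1, u0, uh) \<Rightarrow> u1 \<in> E x 1 \<and> u0 \<in> E x 0 \<and> uh \<in> E x (1/2) \<and> u = u1 + u0 + uh"
    by (metis (no_types, lifting) ex1E)
  then show "\<exists>u1 u0 uh. u1 \<in> E x 1 \<and> u0 \<in> E x 0 \<and> uh \<in> E x (1/2) \<and> u = u1 + u0 + uh"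
    by (cases y) auto
qed

lemma half_zero: "c = scale (1/2) c \<Longrightarrow> c = (0::'a)"
proof -
  assume "c = scale (1/2) c"
  then have "scale 1 c - scale (1/2) c = 0" by simp
  then have "scale (1 - 1/2) c = 0" by (simp only: V.scale_left_diff_distrib)
  then show ?thesis by simp
qed

lemma half_zero_k: "(c::'k) = (1/2) * c \<Longrightarrow> c = 0" by simp

lemma B_E0: "mult x x = x \<Longrightarrow> u \<in> E x 0 \<Longrightarrow> B x u = 0"
  by (metis Bassoc E_iff V.scale_zero_left Brzero)
lemma B_Eh: "mult x x = x \<Longrightarrow> u \<in> E x (1/2) \<Longrightarrow> B x u = 0"
  by (metis Bassoc E_iff Brscale half_zero_k)

lemma prim_good:
  assumes p: "prim_axis_half scale mult x" shows "good x"
proof -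
  note f = prim_facts[OF p]
  have dec: "P1 x u \<in> E x 1 \<and> P0 x u \<in> E x 0 \<and> Ph x u \<in> E x (1/2)" for u
    using f(3)[of u] proj by metis
  have c2: "P1 x u = scale (B x u) x" for u
  proof -
    obtain u1 u0 uh where h: "u1 \<in> E x 1" "u0 \<in> E x 0" "uh \<in> E x (1/2)" "u = u1 + u0 + uh"
      using f(3) by blast
    obtain c where c: "u1 = scale c x" using h(1) f(4) by auto
    have "B x u = c"
      using h c B_E0[OF f(2) h(2)] B_Eh[OF f(2) h(3)] Bone[OF p] by (simp add: Bradd Brscale)
    then show ?thesis using proj(1)[OF h] c by simp
  qed
  have f3: "mult x (mult (P0 x u) (P0 x v)) = 0" for u v
    using f(5)[OF dec[THEN conjunct2, THEN conjunct1] dec[THEN conjunct2, THEN conjunct1]] by (simp add: E_iff)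
  have f5: "mult x (mult (P0 x u) (Ph x v)) = scale (1/2) (mult (P0 x u) (Ph x v))" for u v
    using f(6)[OF dec[THEN conjunct2, THEN conjunct1] dec[THEN conjunct2, THEN conjunct2]] by (simp add: E_iff)
  have f6: "Ph x (mult (Ph x u) (Ph x v)) = 0" for u v
  proof -
    obtain p q where "p \<in> E x 1" "q \<in> E x 0" "mult (Ph x u) (Ph x v) = p + q"
      using f(7)[OF dec[THEN conjunct2, THEN conjunct2] dec[THEN conjunct2, THEN conjunct2]] by blast
    then show ?thesis using proj(2)[of p x q 0] by simp
  qed
  show ?thesis unfolding good_def using f(1,2) dec c2 f3 f5 f6 by blast
qed


definition vs :: "(nat \<times> 'a) list \<Rightarrow> 'k \<Rightarrow> 'a" where
  "vs L t = sum_list (map (\<lambda>(k,v). scale (t^k) v) L)"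

definition vp :: "('k \<Rightarrow> 'a) \<Rightarrow> bool" where "vp F \<longleftrightarrow> (\<exists>L. \<forall>t. F t = vs L t)"

lemma vs_Nil[simp]: "vs [] t = 0" by (simp add: vs_def)
lemma vs_Cons[simp]: "vs ((k,v) # L) t = scale (t^k) v + vs L t" by (simp add: vs_def)
lemma vs_append[simp]: "vs (L1 @ L2) t = vs L1 t + vs L2 t" by (simp add: vs_def)

lemma vp_const: "vp (\<lambda>t. c)"
  unfolding vp_def by (rule exI[of _ "[(0,c)]"]) simp

lemma vp_var: "vp F \<Longrightarrow> vp (\<lambda>t. scale t (F t))"
proof -
  assume "vp F" then obtain L where L: "\<And>t. F t = vs L t" unfolding vp_def by blast
  have "vs (map (\<lambda>(k,v). (Suc k, v)) L) t = scale t (vs L t)" for t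
    by (induction L) (auto simp: V.scale_right_distrib mult.commute)
  then show ?thesis unfolding vp_def L by metis
qed

lemma vp_add: "vp F \<Longrightarrow> vp G \<Longrightarrow> vp (\<lambda>t. F t + G t)"
  unfolding vp_def by (metis vs_append)

lemma vp_scale: "vp F \<Longrightarrow> vp (\<lambda>t. scale c (F t))"
proof -
  assume "vp F" then obtain L where L: "\<And>t. F t = vs L t" unfolding vp_def by blast
  have "vs (map (\<lambda>(k,v). (k, scale c v)) L) t = scale c (vs L t)" for t
    by (induction L) (auto simp: V.scale_right_distrib mult.commute)
  then show ?thesis unfolding vp_def L by metis
qed

lemma vp_minus: "vp F \<Longrightarrow> vp (\<lambda>t. - F t)"
  using vp_scale[of F "-1"] by simp

lemma vp_diff: "vp F \<Longrightarrow> vp G \<Longrightarrow> vp (\<lambda>t. F t - G t)"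
  using vp_add[of F "\<lambda>t. - G t"] vp_minus[of G] by simp

lemma mult_vs_l: "mult (vs L t) w = vs (map (\<lambda>(k,v). (k, mult v w)) L) t"
  by (induction L) (auto simp: ladd lscale)

lemma mult_vs: "mult (vs L1 t) (vs L2 t) =
   vs (concat (map (\<lambda>(k1,v1). map (\<lambda>(k2,v2). (k1+k2, mult v1 v2)) L2) L1)) t"
proof (induction L1)
  case Nil then show ?case by simp
next
  case (Cons a L1)
  obtain k1 v1 where a: "a = (k1, v1)" by (cases a)
  have "mult (scale (t^k1) v1) (vs L2 t) = vs (map (\<lambda>(k2,v2). (k1+k2, mult v1 v2)) L2) t"
    by (induction L2) (auto simp: radd lscale rscale power_add V.scale_right_distrib)
  then show ?case using Cons a by (simp add: ladd)
qed

lemma vp_mult: "vp F \<Longrightarrow> vp G \<Longrightarrow> vp (\<lambda>t. mult (F t) (G t))"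
  unfolding vp_def by (metis mult_vs)

lemma Bscale_vs: "scale (B (vs L1 t) u) (vs L2 t) =
   vs (concat (map (\<lambda>(k1,v1). map (\<lambda>(k2,v2). (k1+k2, scale (B v1 u) v2)) L2) L1)) t"
proof (induction L1)
  case Nil then show ?case by simp
next
  case (Cons a L1)
  obtain k1 v1 where a: "a = (k1, v1)" by (cases a)
  have "scale (B (scale (t^k1) v1) u) (vs L2 t) = vs (map (\<lambda>(k2,v2). (k1+k2, scale (B v1 u) v2)) L2) t"
    by (induction L2) (auto simp: Blscale V.scale_right_distrib power_add mult.commute mult.left_commute)
  then show ?case using Cons a by (simp add: Bladd V.scale_left_distrib)
qed

lemma vp_Bscale: "vp F \<Longrightarrow> vp G \<Longrightarrow> vp (\<lambda>t. scale (B (F t) u) (G t))"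
  unfolding vp_def by (metis Bscale_vs)

lemmas vp_intros = vp_const vp_var vp_add vp_scale vp_minus vp_diff vp_mult vp_Bscale

definition Bas where "Bas = V.extend_basis {}"
lemma Bas_ind: "V.independent Bas" unfolding Bas_def
  by (rule V.independent_extend_basis) (simp add: V.independent_empty)
lemma Bas_span: "v \<in> V.span Bas" unfolding Bas_def
  using V.span_extend_basis[of "{}"] by (simp add: V.independent_empty)

definition pL where "pL L b = sum_list (map (\<lambda>(k,v). monom (V.representation Bas v b) k) L)"

lemma R_vs: "V.representation Bas (vs L t) b = poly (pL L b) t"
proof (induction L)
  case Nil then show ?case by (simp add: pL_def V.representation_zero)
next
  case (Cons a L)
  obtain k v where a: "a = (k, v)" by (cases a)
  show ?case using Cons a
    by (simp add: pL_def V.representation_add[OF Bas_ind Bas_span Bas_span]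
        V.representation_scale[OF Bas_ind Bas_span] poly_monom mult.commute)
qed

lemma vs_roots:
  assumes inf: "infinite {t. vs L t = 0}" shows "vs L t = 0"
proof -
  have "pL L b = 0" for b
  proof (rule ccontr)
    assume "pL L b \<noteq> 0"
    then have "finite {t. poly (pL L b) t = 0}" by (rule poly_roots_finite)
    moreover have "{t. vs L t = 0} \<subseteq> {t. poly (pL L b) t = 0}"
      using R_vs[of L _ b, symmetric] by (auto simp: V.representation_zero)
    ultimately show False using inf finite_subset by blast
  qed
  then have "V.representation Bas (vs L t) b = 0" for b by (simp add: R_vs)
  then show ?thesis using V.sum_nonzero_representation_eq[OF Bas_ind Bas_span, of "vs L t"] by simp
qed

lemma vp_roots:
  assumes "vp F" "infinite {t. F t = 0}" shows "F t = 0"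
  using assms vs_roots unfolding vp_def by (metis (no_types, lifting) Collect_cong)

lemma vp_eq:
  assumes "vp F" "vp G" "infinite {t. F t = G t}" shows "F t = G t"
proof -
  have "vp (\<lambda>t. F t - G t)" using vp_diff[OF assms(1,2)] .
  moreover have "{t. F t = G t} = {t. F t - G t = 0}" by (simp only: right_minus_eq)
  ultimately have "F t - G t = 0" using vp_roots[of "\<lambda>t. F t - G t"] assms(3) by metis
  then show ?thesis by simp
qed


lemma vp_P1: "vp e \<Longrightarrow> vp (\<lambda>t. P1 (e t) u)" unfolding P1_def by (intro vp_intros)
lemma vp_Ph: "vp e \<Longrightarrow> vp (\<lambda>t. Ph (e t) u)" unfolding Ph_def by (intro vp_intros)
lemma vp_P0: "vp e \<Longrightarrow> vp (\<lambda>t. P0 (e t) u)" unfolding P0_def by (intro vp_intros vp_P1 vp_Ph)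
lemma vp_Ph': "vp e \<Longrightarrow> vp F \<Longrightarrow> vp (\<lambda>t. Ph (e t) (F t))" unfolding Ph_def by (intro vp_intros)

lemma good_ext:
  assumes ve: "vp e" and inf: "infinite S" and gS: "\<And>s. s \<in> S \<Longrightarrow> good (e s)"
    and nz: "e t \<noteq> 0" and idem: "mult (e t) (e t) = e t"
  shows "good (e t)"
proof -
  have ext: "F t = G t" if "vp F" "vp G" "\<And>s. s \<in> S \<Longrightarrow> F s = G s" for F G
  proof (rule vp_eq[OF that(1,2)])
    have "S \<subseteq> {t. F t = G t}" using that(3) by blast
    then show "infinite {t. F t = G t}" using inf finite_subset by blast
  qed
  have g: "\<And>s. s \<in> S \<Longrightarrow>
    (\<forall>u. P1 (e s) u \<in> E (e s) 1 \<and> P0 (e s) u \<in> E (e s) 0 \<and> Ph (e s) u \<in> E (e s) (1/2)) \<and>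
    (\<forall>u. P1 (e s) u = scale (B (e s) u) (e s)) \<and>
    (\<forall>u v. mult (e s) (mult (P0 (e s) u) (P0 (e s) v)) = 0) \<and>
    (\<forall>u v. mult (e s) (mult (P0 (e s) u) (Ph (e s) v)) = scale (1/2) (mult (P0 (e s) u) (Ph (e s) v))) \<and>
    (\<forall>u v. Ph (e s) (mult (Ph (e s) u) (Ph (e s) v)) = 0)"
    using gS unfolding good_def by blast
  have c1: "mult (e t) (P1 (e t) u) = scale 1 (P1 (e t) u)" for u
  proof (rule ext[where F="\<lambda>t. mult (e t) (P1 (e t) u)" and G="\<lambda>t. scale 1 (P1 (e t) u)"])
    show "vp (\<lambda>t. mult (e t) (P1 (e t) u))" by (intro vp_intros vp_P1 ve)
    show "vp (\<lambda>t. scale 1 (P1 (e t) u))" by (intro vp_intros vp_P1 ve)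
    fix s assume "s \<in> S" then show "mult (e s) (P1 (e s) u) = scale 1 (P1 (e s) u)"
      using g[of s] unfolding E_iff by blast
  qed
  have c2: "mult (e t) (P0 (e t) u) = scale 0 (P0 (e t) u)" for u
    by (rule ext[where F="\<lambda>t. mult (e t) (P0 (e t) u)" and G="\<lambda>t. scale 0 (P0 (e t) u)"])
      (use g in \<open>auto simp: E_iff intro!: vp_intros vp_P0 ve\<close>)
  have c3: "mult (e t) (Ph (e t) u) = scale (1/2) (Ph (e t) u)" for u
    by (rule ext[where F="\<lambda>t. mult (e t) (Ph (e t) u)" and G="\<lambda>t. scale (1/2) (Ph (e t) u)"])
      (use g in \<open>auto simp: E_iff intro!: vp_intros vp_Ph ve\<close>)
  have c4: "P1 (e t) u = scale (B (e t) u) (e t)" for u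
    by (rule ext[where F="\<lambda>t. P1 (e t) u" and G="\<lambda>t. scale (B (e t) u) (e t)"])
      (use g in \<open>auto intro!: vp_intros vp_P1 ve\<close>)
  have c5: "mult (e t) (mult (P0 (e t) u) (P0 (e t) v)) = 0" for u v
    by (rule ext[where F="\<lambda>t. mult (e t) (mult (P0 (e t) u) (P0 (e t) v))" and G="\<lambda>t. 0"])
      (use g in \<open>auto intro!: vp_intros vp_P0 ve\<close>)
  have c6: "mult (e t) (mult (P0 (e t) u) (Ph (e t) v)) = scale (1/2) (mult (P0 (e t) u) (Ph (e t) v))" for u v
    by (rule ext[where F="\<lambda>t. mult (e t) (mult (P0 (e t) u) (Ph (e t) v))"
          and G="\<lambda>t. scale (1/2) (mult (P0 (e t) u) (Ph (e t) v))"])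
      (use g in \<open>auto intro!: vp_intros vp_P0 vp_Ph ve\<close>)
  have c7: "Ph (e t) (mult (Ph (e t) u) (Ph (e t) v)) = 0" for u v
    by (rule ext[where F="\<lambda>t. Ph (e t) (mult (Ph (e t) u) (Ph (e t) v))" and G="\<lambda>t. 0"])
      (use g in \<open>auto intro!: vp_intros vp_Ph vp_Ph' ve\<close>)
  show ?thesis unfolding good_def E_iff using nz idem c1 c2 c3 c4 c5 c6 c7 by blast
qed


lemma aut_prim:
  assumes add: "\<And>u v. \<phi> (u + v) = \<phi> u + \<phi> v" and sc: "\<And>c u. \<phi> (scale c u) = scale c (\<phi> u)"
    and mu: "\<And>u v. \<phi> (mult u v) = mult (\<phi> u) (\<phi> v)" and inv: "\<And>u. \<phi> (\<phi> u) = u"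
    and p: "prim_axis_half scale mult x"
  shows "prim_axis_half scale mult (\<phi> x)"
proof -
  note f = prim_facts[OF p]
  have z: "\<phi> 0 = 0" using add[of 0 0] by simp
  have inj: "\<phi> u = \<phi> v \<Longrightarrow> u = v" for u v using inv by metis
  have Eiff: "u \<in> E (\<phi> x) l \<longleftrightarrow> \<phi> u \<in> E x l" for u l
  proof
    assume "u \<in> E (\<phi> x) l" then have "mult (\<phi> x) u = scale l u" by (simp add: E_iff)
    then have "\<phi> (mult (\<phi> x) u) = \<phi> (scale l u)" by simp
    then show "\<phi> u \<in> E x l" by (simp add: mu sc inv E_iff)
  next
    assume "\<phi> u \<in> E x l" then have "mult x (\<phi> u) = scale l (\<phi> u)" by (simp add: E_iff)
    then have "\<phi> (mult x (\<phi> u)) = \<phi> (scale l (\<phi> u))" by simp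
    then show "u \<in> E (\<phi> x) l" by (simp add: mu sc inv E_iff)
  qed
  have x0: "\<phi> x \<noteq> 0" using f(1) z inj by metis
  have xx: "mult (\<phi> x) (\<phi> x) = \<phi> x" using f(2) mu by metis
  have A1: "E (\<phi> x) 1 = range (\<lambda>c. scale c (\<phi> x))"
  proof
    show "E (\<phi> x) 1 \<subseteq> range (\<lambda>c. scale c (\<phi> x))"
    proof
      fix u assume "u \<in> E (\<phi> x) 1"
      then have "\<phi> u \<in> E x 1" by (simp add: Eiff)
      then obtain c where "\<phi> u = scale c x" using f(4) by auto
      then have "u = scale c (\<phi> x)" using inv sc by metis
      then show "u \<in> range (\<lambda>c. scale c (\<phi> x))" by blast
    qed
    show "range (\<lambda>c. scale c (\<phi> x)) \<subseteq> E (\<phi> x) 1" by (auto simp: E_iff rscale xx)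
  qed
  have dec: "\<exists>!(u1, u0, uh). u1 \<in> E (\<phi> x) 1 \<and> u0 \<in> E (\<phi> x) 0 \<and> uh \<in> E (\<phi> x) (1/2) \<and> u = u1 + u0 + uh" for u
  proof (rule ex1I[where a="(\<phi> (P1 x (\<phi> u)), \<phi> (P0 x (\<phi> u)), \<phi> (Ph x (\<phi> u)))"])
    obtain w1 w0 wh where h: "w1 \<in> E x 1" "w0 \<in> E x 0" "wh \<in> E x (1/2)" "\<phi> u = w1 + w0 + wh"
      using f(3) by blast
    have "u = \<phi> w1 + \<phi> w0 + \<phi> wh" using h(4) inv add by metis
    then show "case (\<phi> (P1 x (\<phi> u)), \<phi> (P0 x (\<phi> u)), \<phi> (Ph x (\<phi> u))) of (u1, u0, uh) \<Rightarrow>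
       u1 \<in> E (\<phi> x) 1 \<and> u0 \<in> E (\<phi> x) 0 \<and> uh \<in> E (\<phi> x) (1/2) \<and> u = u1 + u0 + uh"
      using proj[OF h] h(1-3) by (simp add: Eiff inv)
  next
    fix y assume "case y of (u1, u0, uh) \<Rightarrow>
       u1 \<in> E (\<phi> x) 1 \<and> u0 \<in> E (\<phi> x) 0 \<and> uh \<in> E (\<phi> x) (1/2) \<and> u = u1 + u0 + uh"
    then obtain u1 u0 uh where y: "y = (u1, u0, uh)" and h: "u1 \<in> E (\<phi> x) 1" "u0 \<in> E (\<phi> x) 0" "uh \<in> E (\<phi> x) (1/2)" "u = u1 + u0 + uh"
      by (cases y) auto
    have h': "\<phi> u1 \<in> E x 1" "\<phi> u0 \<in> E x 0" "\<phi> uh \<in> E x (1/2)" "\<phi> u = \<phi> u1 + \<phi> u0 + \<phi> uh"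
      using h by (auto simp: Eiff add)
    show "y = (\<phi> (P1 x (\<phi> u)), \<phi> (P0 x (\<phi> u)), \<phi> (Ph x (\<phi> u)))" using proj[OF h'] y inv by simp
  qed
  have fus11: "\<forall>u\<in>E (\<phi> x) 1. \<forall>v\<in>E (\<phi> x) 1. mult u v \<in> E (\<phi> x) 1"
    using A1 by (auto simp: lscale rscale xx E_iff)
  have fus10: "\<forall>u\<in>E (\<phi> x) 1. \<forall>v\<in>E (\<phi> x) 0. mult u v = 0"
    using A1 by (auto simp: lscale E_iff)
  have fus1h: "\<forall>u\<in>E (\<phi> x) 1. \<forall>v\<in>E (\<phi> x) (1/2). mult u v \<in> E (\<phi> x) (1/2)"
    using A1 by (auto simp: lscale rscale E_iff V.scale_left_commute)
  have fus00: "\<forall>u\<in>E (\<phi> x) 0. \<forall>v\<in>E (\<phi> x) 0. mult u v \<in> E (\<phi> x) 0"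
    using f(5) by (simp add: Eiff mu)
  have fus0h: "\<forall>u\<in>E (\<phi> x) 0. \<forall>v\<in>E (\<phi> x) (1/2). mult u v \<in> E (\<phi> x) (1/2)"
    using f(6) by (simp add: Eiff mu)
  have fushh: "\<forall>u\<in>E (\<phi> x) (1/2). \<forall>v\<in>E (\<phi> x) (1/2). \<exists>p q. p \<in> E (\<phi> x) 1 \<and> q \<in> E (\<phi> x) 0 \<and> mult u v = p + q"
  proof (intro ballI)
    fix u v assume "u \<in> E (\<phi> x) (1/2)" "v \<in> E (\<phi> x) (1/2)"
    then obtain p q where "p \<in> E x 1" "q \<in> E x 0" "mult (\<phi> u) (\<phi> v) = p + q"
      using f(7) by (metis Eiff)
    then have "\<phi> p \<in> E (\<phi> x) 1" "\<phi> q \<in> E (\<phi> x) 0" "mult u v = \<phi> p + \<phi> q"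
      by (auto simp: Eiff inv) (metis add inv mu)
    then show "\<exists>p q. p \<in> E (\<phi> x) 1 \<and> q \<in> E (\<phi> x) 0 \<and> mult u v = p + q" by blast
  qed
  show ?thesis unfolding prim_axis_half_def Let_def E_def[symmetric]
    using x0 xx dec A1 fus11 fus10 fus00 fus1h fus0h fushh by blast
qed


lemma E_add: "u \<in> E x l \<Longrightarrow> v \<in> E x l \<Longrightarrow> u + v \<in> E x l"
  by (simp add: E_iff radd V.scale_right_distrib)
lemma E_scale: "u \<in> E x l \<Longrightarrow> scale c u \<in> E x l"
  by (simp add: E_iff rscale V.scale_left_commute)

lemma Ph_add: "Ph x (u + v) = Ph x u + Ph x v"
  by (simp add: Ph_def radd V.scale_right_diff_distrib V.scale_right_distrib algebra_simps)
lemma Ph_scale: "Ph x (scale c u) = scale c (Ph x u)"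
  by (simp add: Ph_def rscale V.scale_right_diff_distrib mult.commute)

definition tau where "tau x u = u - scale 2 (Ph x u)"

lemma tau_split:
  assumes "w1 \<in> E x 1" "w0 \<in> E x 0" "wh \<in> E x (1/2)"
  shows "tau x (w1 + w0 + wh) = w1 + w0 - wh"
  using proj(2)[OF assms refl] by (simp add: tau_def s2)

lemma tau_add: "tau x (u + v) = tau x u + tau x v"
  by (simp add: tau_def Ph_add V.scale_right_distrib algebra_simps)
lemma tau_scale: "tau x (scale c u) = scale c (tau x u)"
  by (simp add: tau_def Ph_scale V.scale_right_diff_distrib V.scale_left_commute)

lemma E1_mult:
  assumes p: "prim_axis_half scale mult x" and u: "u \<in> E x 1"
  shows "v \<in> E x 0 \<Longrightarrow> mult u v = 0" "v \<in> E x (1/2) \<Longrightarrow> mult u v \<in> E x (1/2)"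
    "v \<in> E x 1 \<Longrightarrow> mult u v \<in> E x 1"
proof -
  note f = prim_facts[OF p]
  obtain c where c: "u = scale c x" using u f(4) by auto
  show "v \<in> E x 0 \<Longrightarrow> mult u v = 0" by (simp add: c lscale E_iff)
  show "v \<in> E x (1/2) \<Longrightarrow> mult u v \<in> E x (1/2)"
  proof -
    assume v: "v \<in> E x (1/2)"
    then have "mult u v = scale (c * (1/2)) v" by (simp add: c lscale E_iff)
    then show ?thesis using E_scale[OF v] by metis
  qed
  show "v \<in> E x 1 \<Longrightarrow> mult u v \<in> E x 1"
  proof -
    assume v: "v \<in> E x 1"
    then have "mult u v = scale c v" by (simp add: c lscale E_iff)
    then show ?thesis using E_scale[OF v] by metis
  qed
qed

lemma tau_inv:
  assumes p: "prim_axis_half scale mult x" shows "tau x (tau x u) = u"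
proof -
  note f = prim_facts[OF p]
  obtain u1 u0 uh where h: "u1 \<in> E x 1" "u0 \<in> E x 0" "uh \<in> E x (1/2)" "u = u1 + u0 + uh"
    using f(3) by blast
  have m: "- uh \<in> E x (1/2)" using E_scale[OF h(3), of "-1"] by simp
  have "tau x u = u1 + u0 + (- uh)" using tau_split[OF h(1-3)] h(4) by simp
  then have "tau x (tau x u) = u1 + u0 - (- uh)" using tau_split[OF h(1,2) m] by simp
  then show ?thesis using h(4) by simp
qed

lemma tau_mult:
  assumes p: "prim_axis_half scale mult x" shows "tau x (mult u v) = mult (tau x u) (tau x v)"
proof -
  note f = prim_facts[OF p]
  obtain u1 u0 uh where hu: "u1 \<in> E x 1" "u0 \<in> E x 0" "uh \<in> E x (1/2)" "u = u1 + u0 + uh"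
    using f(3) by blast
  obtain v1 v0 vh where hv: "v1 \<in> E x 1" "v0 \<in> E x 0" "vh \<in> E x (1/2)" "v = v1 + v0 + vh"
    using f(3) by blast
  obtain p q where pq: "p \<in> E x 1" "q \<in> E x 0" "mult uh vh = p + q" using f(7)[OF hu(3) hv(3)] by blast
  have z1: "mult u1 v0 = 0" using E1_mult(1)[OF p hu(1) hv(2)] .
  have z2: "mult u0 v1 = 0" using E1_mult(1)[OF p hv(1) hu(2)] comm by metis
  have W1: "mult u1 v1 + p \<in> E x 1" using E1_mult(3)[OF p hu(1) hv(1)] pq(1) E_add by blast
  have W0: "mult u0 v0 + q \<in> E x 0" using f(5)[OF hu(2) hv(2)] pq(2) E_add by blast
  have a1: "mult u1 vh \<in> E x (1/2)" using E1_mult(2)[OF p hu(1) hv(3)] .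
  have a2: "mult uh v1 \<in> E x (1/2)" using E1_mult(2)[OF p hv(1) hu(3)] comm by metis
  have a3: "mult u0 vh \<in> E x (1/2)" using f(6)[OF hu(2) hv(3)] .
  have a4: "mult uh v0 \<in> E x (1/2)" using f(6)[OF hv(2) hu(3)] comm by metis
  have Wh: "mult u1 vh + mult uh v1 + mult u0 vh + mult uh v0 \<in> E x (1/2)"
    using a1 a2 a3 a4 E_add by blast
  have uv: "mult u v = (mult u1 v1 + p) + (mult u0 v0 + q) + (mult u1 vh + mult uh v1 + mult u0 vh + mult uh v0)"
    unfolding hu(4) hv(4) by (simp add: ladd radd z1 z2 pq(3) algebra_simps)
  have tu: "tau x u = u1 + u0 - uh" using tau_split[OF hu(1-3)] hu(4) by simp
  have tv: "tau x v = v1 + v0 - vh" using tau_split[OF hv(1-3)] hv(4) by simp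
  have "mult (tau x u) (tau x v) = (mult u1 v1 + p) + (mult u0 v0 + q) - (mult u1 vh + mult uh v1 + mult u0 vh + mult uh v0)"
    unfolding tu tv by (simp add: ladd radd ldiff rdiff z1 z2 pq(3) algebra_simps)
  then show ?thesis using tau_split[OF W1 W0 Wh] uv by simp
qed

lemma tau_prim:
  assumes "prim_axis_half scale mult x" "prim_axis_half scale mult y"
  shows "prim_axis_half scale mult (tau x y)"
  by (rule aut_prim[OF tau_add tau_scale tau_mult[OF assms(1)] tau_inv[OF assms(1)] assms(2)])


lemma pair_basic:
  assumes px: "prim_axis_half scale mult x" and Bxy: "B x y = 0"
  shows "mult y x \<in> E x (1/2)" "P0 x y \<in> E x 0" "y = P0 x y + scale 2 (mult y x)"
    "mult x y \<in> E x (1/2)"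
proof -
  note g = prim_good[OF px, unfolded good_def]
  have P1z: "P1 x y = 0" using g Bxy by simp
  have m0: "P0 x y \<in> E x 0" and mh: "Ph x y \<in> E x (1/2)" using g by blast+
  have yd: "y = P0 x y + Ph x y" using decomp_sum[of y x] P1z by simp
  have "mult x y = mult x (P0 x y) + mult x (Ph x y)" by (subst yd) (simp add: radd)
  also have "\<dots> = scale (1/2) (Ph x y)" using m0 mh by (simp add: E_iff)
  finally have n: "mult x y = scale (1/2) (Ph x y)" .
  then have "scale 2 (mult x y) = Ph x y" by simp
  then show "y = P0 x y + scale 2 (mult y x)" using yd comm by metis
  show "mult x y \<in> E x (1/2)" using n E_scale[OF mh] by simp
  then show "mult y x \<in> E x (1/2)" using comm by metis
  show "P0 x y \<in> E x 0" by (rule m0)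
qed

lemma Ph_E0: "w \<in> E x 0 \<Longrightarrow> Ph x w = 0" using proj(2)[of 0 x w 0 w] by simp
lemma Ph_Eh: "w \<in> E x (1/2) \<Longrightarrow> Ph x w = w" using proj(2)[of 0 x 0 w w] by simp

context
  fixes a b
  assumes pa: "prim_axis_half scale mult a" and pb: "prim_axis_half scale mult b" and Bab: "B a b = 0"
begin

definition "n = mult a b"

lemma n_comm: "mult b a = n" unfolding n_def using comm by metis

lemma an: "mult a n = scale (1/2) n"
  using pair_basic(4)[OF pa Bab] unfolding n_def E_iff .

lemma Ban: "B a n = 0" using B_Eh[OF prim_facts(2)[OF pa]] pair_basic(4)[OF pa Bab] unfolding n_def by blast

lemma Bba: "B b a = 0"
proof -
  have "B b a = B b (mult a a)" using prim_facts(2)[OF pa] by simp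
  also have "\<dots> = B (mult b a) a" by (simp add: Bassoc)
  also have "\<dots> = B (mult a b) a" using comm by metis
  also have "\<dots> = B a (mult b a)" by (simp add: Bassoc)
  also have "\<dots> = B a n" using n_comm by simp
  finally show ?thesis using Ban by simp
qed

lemma bn: "mult b n = scale (1/2) n"
  using pair_basic(4)[OF pb Bba] n_comm unfolding E_iff by simp

lemma nn: "mult n n = 0"
proof -
  note g = prim_good[OF pa, unfolded good_def]
  define b0 where "b0 = P0 a b"
  define bh where "bh = scale 2 n"
  have b0: "b0 \<in> E a 0" unfolding b0_def by (rule pair_basic(2)[OF pa Bab])
  have bd: "b = b0 + bh" unfolding b0_def bh_def using pair_basic(3)[OF pa Bab] n_comm by simp
  have bh: "bh \<in> E a (1/2)" unfolding bh_def n_def by (rule E_scale[OF pair_basic(4)[OF pa Bab]])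
  obtain p q where pq: "p \<in> E a 1" "q \<in> E a 0" "mult bh bh = p + q"
    using prim_facts(7)[OF pa bh bh] by blast
  have e1: "Ph a (mult b0 b0) = 0" using Ph_E0 prim_facts(5)[OF pa b0 b0] by blast
  have e2: "Ph a (mult b0 bh) = mult b0 bh" using Ph_Eh prim_facts(6)[OF pa b0 bh] by blast
  have "mult bh bh = p + q + 0" using pq(3) by simp
  then have e3: "Ph a (mult bh bh) = 0" using proj(2)[OF pq(1,2) E_zero] by blast
  have "mult b b = mult b0 b0 + (mult b0 bh + mult b0 bh) + mult bh bh"
    unfolding bd by (simp add: ladd radd comm[of bh b0] algebra_simps)
  then have "Ph a (mult b b) = mult b0 bh + mult b0 bh" by (simp add: Ph_add e1 e2 e3)
  moreover have "Ph a (mult b b) = bh"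
    using prim_facts(2)[OF pb] Ph_add[of a b0 bh] Ph_E0[OF b0] Ph_Eh[OF bh] bd by simp
  ultimately have hb: "bh = mult b0 bh + mult b0 bh" by simp
  have "mult bh bh = mult b bh - mult b0 bh" unfolding bd by (simp add: ladd)
  also have "mult b bh = n" unfolding bh_def by (simp add: rscale bn)
  also have "n = mult b0 bh"
  proof -
    have "scale 2 n = scale 2 (mult b0 bh)" using hb unfolding bh_def s2 by simp
    then show ?thesis by simp
  qed
  finally have "mult bh bh = 0" by simp
  then have "scale 4 (mult n n) = 0" unfolding bh_def by (simp add: lscale rscale)
  then show ?thesis by simp
qed


definition "ee t = a + scale t n"

lemma nEa: "n \<in> E a (1/2)" using an by (simp add: E_iff)
lemma nEb: "n \<in> E b (1/2)" using bn by (simp add: E_iff)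

lemma tau_b_ee: "tau b (ee t) = a - scale (t + 4) n"
proof -
  have ad: "a = P0 b a + scale 2 n" using pair_basic(3)[OF pb Bba] n_def by simp
  have m0: "P0 b a \<in> E b 0" by (rule pair_basic(2)[OF pb Bba])
  have mh: "scale (2 + t) n \<in> E b (1/2)" by (rule E_scale[OF nEb])
  have "ee t = 0 + P0 b a + scale (2 + t) n"
    unfolding ee_def by (subst ad) (simp add: V.scale_left_distrib add.assoc)
  then have "tau b (ee t) = 0 + P0 b a - scale (2 + t) n" using tau_split[OF E_zero m0 mh] by simp
  also have "\<dots> = a - scale 2 n - scale (2 + t) n" using ad by (simp add: algebra_simps)
  also have "\<dots> = a - (scale 2 n + scale (2 + t) n)" by (rule diff_diff_eq)
  also have "scale 2 n + scale (2 + t) n = scale (t + 4) n"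
  proof -
    have "(2::'k) + (2 + t) = t + 4" by simp
    then show ?thesis using V.scale_left_distrib[of 2 "2+t" n] by metis
  qed
  finally show ?thesis .
qed

lemma tau_a_ee: "tau a (a - scale s n) = ee s"
proof -
  have a1: "a \<in> E a 1" using prim_facts(2)[OF pa] by (simp add: E_iff)
  have mh: "scale (- s) n \<in> E a (1/2)" by (rule E_scale[OF nEa])
  have "a - scale s n = a + 0 + scale (- s) n" by (simp add: V.scale_minus_left)
  then show ?thesis using tau_split[OF a1 E_zero mh] by (simp add: ee_def V.scale_minus_left)
qed

lemma ee_nat: "prim_axis_half scale mult (ee (of_nat (4 * k)))"
proof (induction k)
  case 0 then show ?case using pa by (simp add: ee_def)
next
  case (Suc k)
  have "tau a (tau b (ee (of_nat (4 * k)))) = ee (of_nat (4 * Suc k))"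
    using tau_b_ee tau_a_ee by (simp add: add.commute)
  then show ?case using tau_prim[OF pa tau_prim[OF pb Suc.IH]] by simp
qed

lemma ee_nz: "ee t \<noteq> 0"
proof
  assume "ee t = 0"
  then have "B a (ee t) = 0" by simp
  moreover have "B a (ee t) = 1" unfolding ee_def using Bone[OF pa] Ban by (simp add: Bradd Brscale)
  ultimately show False by simp
qed

lemma ee_idem: "mult (ee t) (ee t) = ee t"
proof -
  have "mult (ee t) (ee t) = mult a a + scale t (mult a n) + scale t (mult a n) + scale t (scale t (mult n n))"
    unfolding ee_def by (simp add: ladd radd lscale rscale comm[of n a] algebra_simps)
  also have "\<dots> = a + scale t n"
    using prim_facts(2)[OF pa] an nn
    by (simp add: V.scale_right_distrib[symmetric] V.scale_left_distrib[symmetric] add.assoc s2[symmetric])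
  finally show ?thesis unfolding ee_def .
qed

lemma ee_prim: "prim_axis_half scale mult (ee t)"
proof -
  have ve: "vp ee" unfolding ee_def by (intro vp_intros)
  have inf: "infinite (range (\<lambda>k. (of_nat (4 * k) :: 'k)))"
    by (rule range_inj_infinite) (auto simp: inj_def)
  have "good (ee t)"
    by (rule good_ext[OF ve inf _ ee_nz ee_idem]) (metis (no_types) rangeE prim_good ee_nat)
  then show ?thesis by (rule good_prim)
qed
end


lemma fam:
  assumes "prim_axis_half scale mult x" "prim_axis_half scale mult y" "B x y = 0"
  shows "prim_axis_half scale mult (x + scale t (mult x y))"
  using ee_prim[OF assms] unfolding ee_def[OF assms] n_def[OF assms] .



lemma solid_main:
  assumes pa: "prim_axis_half scale mult a" and pb: "prim_axis_half scale mult b" and Bab: "B a b = 0"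
  shows "solid scale mult a b"
proof -
  define m where "m = mult a b"
  have mn: "n a b = m" using n_def[OF pa pb Bab] m_def by simp
  have aa: "mult a a = a" using prim_facts(2)[OF pa] .
  have bb: "mult b b = b" using prim_facts(2)[OF pb] .
  have ab: "mult a b = m" "mult b a = m" using m_def comm by metis+
  have am: "mult a m = scale (1/2) m" "mult m a = scale (1/2) m" using an[OF pa pb Bab] mn comm by metis+
  have bm: "mult b m = scale (1/2) m" "mult m b = scale (1/2) m" using bn[OF pa pb Bab] mn comm by metis+
  have mm: "mult m m = 0" using nn[OF pa pb Bab] mn by simp
  have Baa: "B a a = 1" using Bone[OF pa] .
  have Bbb: "B b b = 1" using Bone[OF pb] .
  have Bba': "B b a = 0" using Bba[OF pa pb Bab] .
  have Bam: "B a m = 0" using Ban[OF pa pb Bab] mn by simp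
  have Bbm: "B b m = 0" by (metis Bassoc Bba' ab(2) bb)
  have Bma: "B m a = 0" by (metis Bam Bassoc ab(2) m_def)
  have Bmb: "B m b = 0" by (metis Bab Bassoc bb m_def)
  have Bmm: "B m m = 0" by (metis Bam Bassoc Brscale bm(1) m_def mult_zero_right)
  define W where "W = {w. \<exists>\<alpha> \<beta> \<gamma>. w = scale \<alpha> a + scale \<beta> b + scale \<gamma> m}"
  have Wadd: "x + y \<in> W" if xyW: "x \<in> W" "y \<in> W" for x y
  proof -
    obtain \<alpha> \<beta> \<gamma> \<alpha>' \<beta>' \<gamma>' where "x = scale \<alpha> a + scale \<beta> b + scale \<gamma> m" "y = scale \<alpha>' a + scale \<beta>' b + scale \<gamma>' m"
      using xyW unfolding W_def by blast
    then have "x + y = scale (\<alpha> + \<alpha>') a + scale (\<beta> + \<beta>') b + scale (\<gamma> + \<gamma>') m"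
      by (simp add: V.scale_left_distrib algebra_simps)
    then show ?thesis unfolding W_def by blast
  qed
  have Wscale: "scale c x \<in> W" if xW: "x \<in> W" for x c
  proof -
    obtain \<alpha> \<beta> \<gamma> where "x = scale \<alpha> a + scale \<beta> b + scale \<gamma> m"
      using xW unfolding W_def by blast
    then have "scale c x = scale (c * \<alpha>) a + scale (c * \<beta>) b + scale (c * \<gamma>) m"
      by (simp add: V.scale_right_distrib)
    then show ?thesis unfolding W_def by blast
  qed
  have Wa: "a \<in> W" unfolding W_def by (rule CollectI, rule exI[of _ 1], rule exI[of _ 0], rule exI[of _ 0]) simp
  have Wb: "b \<in> W" unfolding W_def by (rule CollectI, rule exI[of _ 0], rule exI[of _ 1], rule exI[of _ 0]) simp
  have Wm: "m \<in> W" unfolding W_def by (rule CollectI, rule exI[of _ 0], rule exI[of _ 0], rule exI[of _ 1]) simp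
  have W0: "0 \<in> W" using Wscale[OF Wa, of 0] by simp
  have Wlin: "scale \<alpha> x + scale \<beta> y + scale \<gamma> z \<in> W" if "x \<in> W" "y \<in> W" "z \<in> W" for x y z \<alpha> \<beta> \<gamma>
    using that Wadd Wscale by blast
  have Wgen: "mult g w \<in> W" if g: "g \<in> {a, b, m}" and w: "w \<in> W" for g w
  proof -
    obtain \<alpha> \<beta> \<gamma> where wd: "w = scale \<alpha> a + scale \<beta> b + scale \<gamma> m"
      using w unfolding W_def by blast
    have "mult g w = scale \<alpha> (mult g a) + scale \<beta> (mult g b) + scale \<gamma> (mult g m)"
      unfolding wd by (simp add: radd rscale)
    moreover have "mult g a \<in> W" "mult g b \<in> W" "mult g m \<in> W"
      using g aa ab am bb bm mm Wa Wb Wm Wscale W0 by auto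
    ultimately show ?thesis using Wlin by simp
  qed
  have Wmult: "mult v w \<in> W" if v: "v \<in> W" and w: "w \<in> W" for v w
  proof -
    obtain \<alpha> \<beta> \<gamma> where vd: "v = scale \<alpha> a + scale \<beta> b + scale \<gamma> m"
      using v unfolding W_def by blast
    have "mult v w = scale \<alpha> (mult a w) + scale \<beta> (mult b w) + scale \<gamma> (mult m w)"
      unfolding vd by (simp add: ladd lscale)
    then show ?thesis using Wlin Wgen[OF _ w] by simp
  qed
  have JW: "x \<in> W" if "x \<in> gen_subalg scale mult {a, b}" for x
    using that
  proof (induction rule: gen_subalg.induct)
    case (gen_base x) then show ?case using Wa Wb by auto
  next
    case gen_zero then show ?case by (rule W0)
  next
    case (gen_add x y) then show ?case using Wadd by blast
  next
    case (gen_scale x c) then show ?case using Wscale by blast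
  next
    case (gen_mult x y) then show ?case using Wmult by blast
  qed
  have Ja: "a \<in> gen_subalg scale mult {a, b}" by (rule gen_base) simp
  have Jb: "b \<in> gen_subalg scale mult {a, b}" by (rule gen_base) simp
  have Jm: "m \<in> gen_subalg scale mult {a, b}" unfolding m_def by (rule gen_mult[OF Ja Jb])
  show ?thesis unfolding solid_def
  proof (intro ballI impI, elim conjE)
    fix c assume cJ: "c \<in> gen_subalg scale mult {a, b}" and cc: "mult c c = c" and c0: "c \<noteq> 0"
      and nid: "\<not> is_identity_of mult (gen_subalg scale mult {a, b}) c"
    obtain \<alpha> \<beta> \<gamma> where cd: "c = scale \<alpha> a + scale \<beta> b + scale \<gamma> m"
      using JW[OF cJ] unfolding W_def by blast
    have Bac: "B a c = \<alpha>" unfolding cd by (simp add: Bradd Brscale Baa Bab Bam)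
    have Bbc: "B b c = \<beta>" unfolding cd by (simp add: Bradd Brscale Bba' Bbb Bbm)
    have Bmc: "B m c = 0" unfolding cd by (simp add: Bradd Brscale Bma Bmb Bmm)
    have ac: "mult a c = scale \<alpha> a + scale (\<beta> + \<gamma> / 2) m"
      unfolding cd by (simp add: radd rscale aa ab am V.scale_left_distrib)
    have bc: "mult b c = scale \<beta> b + scale (\<alpha> + \<gamma> / 2) m"
      unfolding cd by (simp add: radd rscale bb ab bm V.scale_left_distrib algebra_simps)
    have "B a (mult c c) = B (mult a c) c" by (simp add: Bassoc)
    also have "\<dots> = \<alpha> * \<alpha>" unfolding ac by (simp add: Bladd Blscale Bac Bmc)
    finally have a2: "\<alpha> * \<alpha> = \<alpha>" using cc Bac by simp
    have "B b (mult c c) = B (mult b c) c" by (simp add: Bassoc)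
    also have "\<dots> = \<beta> * \<beta>" unfolding bc by (simp add: Bladd Blscale Bbc Bmc)
    finally have b2: "\<beta> * \<beta> = \<beta>" using cc Bbc by simp
    have al: "\<alpha> = 0 \<or> \<alpha> = 1" using a2 by (metis mult_cancel_right1 mult_zero_left)
    have be: "\<beta> = 0 \<or> \<beta> = 1" using b2 by (metis mult_cancel_right1 mult_zero_left)
    show "prim_axis_half scale mult c"
    proof (cases "\<alpha> = 0")
      case a0: True
      show ?thesis
      proof (cases "\<beta> = 0")
        case True
        then have "c = scale \<gamma> m" using cd a0 by simp
        then have "mult c c = 0" by (simp add: lscale rscale mm)
        then show ?thesis using cc c0 by simp
      next
        case False
        then have "c = b + scale \<gamma> (mult b a)" using cd a0 be ab by simp
        then show ?thesis using fam[OF pb pa Bba'] by simp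
      qed
    next
      case a1: False
      then have a1: "\<alpha> = 1" using al by simp
      show ?thesis
      proof (cases "\<beta> = 0")
        case True
        then have "c = a + scale \<gamma> (mult a b)" using cd a1 ab by simp
        then show ?thesis using fam[OF pa pb Bab] by simp
      next
        case False
        then have b1: "\<beta> = 1" using be by simp
        have cd': "c = a + b + scale \<gamma> m" using cd a1 b1 by simp
        have "mult c c = a + b + scale (2 + 2 * \<gamma>) m"
          unfolding cd' by (simp add: ladd radd lscale rscale aa bb ab am bm mm V.scale_left_distrib
              V.scale_right_distrib algebra_simps s2[symmetric])
        then have "a + b + scale (2 + 2 * \<gamma>) m = a + b + scale \<gamma> m" using cc cd' by simp
        then have "scale (2 + 2 * \<gamma>) m - scale \<gamma> m = 0" by simp
        then have "scale (2 + 2 * \<gamma> - \<gamma>) m = 0" by (simp only: V.scale_left_diff_distrib)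
        moreover have "(2 + 2 * \<gamma> - \<gamma>) = 2 + \<gamma>" by simp
        ultimately have "scale (2 + \<gamma>) m = 0" by simp
        then have cm: "scale \<gamma> m = scale (-2) m"
          by (metis V.scale_eq_0_iff add.commute add_eq_0_iff)
        have cd'': "c = a + b + scale (-2) m" using cd' cm by simp
        have ida: "mult c a = a" unfolding cd'' by (simp add: ladd ldiff lscale aa ab am bm)
        have idb: "mult c b = b" unfolding cd'' by (simp add: ladd ldiff lscale bb ab am bm)
        have idm: "mult c m = m" unfolding cd'' by (simp add: ladd ldiff lscale mm am bm s2[symmetric])
        have "mult c u = u" if uJ: "u \<in> gen_subalg scale mult {a, b}" for u
        proof -
          obtain x y z where "u = scale x a + scale y b + scale z m" using JW[OF uJ] unfolding W_def by blast
          then show ?thesis by (simp add: radd rscale ida idb idm)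
        qed
        then have "is_identity_of mult (gen_subalg scale mult {a, b}) c"
          unfolding is_identity_of_def using cJ by blast
        then show ?thesis using nid by simp
      qed
    qed
  qed
qed

end

theorem proposition6p7:
  fixes scale :: "'k::field_char_0 \<Rightarrow> 'a::ab_group_add \<Rightarrow> 'a"
    and mult :: "'a \<Rightarrow> 'a \<Rightarrow> 'a"
    and B :: "'a \<Rightarrow> 'a \<Rightarrow> 'k"
    and a b :: 'a
  assumes "jordan_half_algebra scale mult"
    and "frobenius_form scale mult B"
    and "prim_axis_half scale mult a"
    and "prim_axis_half scale mult b"
    and "B a b = 0"
  shows "solid scale mult a b"
proof -
  have "jh scale mult B" unfolding jh_def using assms(1,2) unfolding jordan_half_algebra_def by blast
  then show ?thesis using jh.solid_main assms(3-5) by blast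
qed

end
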